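(* Let $G_M$ be a maximal reducible graph, let $T_M$ be a persistent phylogeny solving $G_M$, and let $c,c'$ be overlapping characters occurring in $T_M$ and inactive in $G_M$. Then one of the following holds: (1) $T_M$ contains (in this order along a root-to-leaf path) the edges $c^+$, $c'^+$, $c^-$, $c'^-$, where $c'^-$ may be missing; (2) $T_M$ contains (in this order along a root-to-leaf path) the edges $c'^+$, $c^+$, $c'^-$, $c^-$, where $c^-$ may be missing; (3) $c^-$ and $c'^-$ appear in two distinct paths of $T_M$, and, if $c$ and $c'$ are conflicting in $G_M$, $T_M$ has a species preceding both $c^+$ and $c'^+$.
   Context: Persistent phylogeny. Let $M$ be a binary matrix with rows indexed by species $S$ and columns by characters $C=\{c_1,\dots,c_m\}$, and $A\subseteq C$ (active characters). A persistent phylogeny for $(M,A)$ is a rooted tree $T$ whose nodes $x$ carry vectors $l_x\in\{0,1\}^m$ (the state of $x$) such that: the root $r$ has $l_r[j]=1$ iff $c_j\in A$; each edge is labelled $c_j^+$ for each character changing from 0 to 1 on it and $c_j^-$ for each changing from 1 to 0; each character changes state on at most two edges, and if on two, they lie on one root-to-leaf path with the gain $c_j^+$ closer to the root than the loss $c_j^-$; each row of $M$ equals $l_x$ for some node $x$ (called a species of $T$). Edges are identified with their labels. Red-black graphs. A red-black graph on species $S$ and characters $C$ is a bipartite graph on $S\cup C$ with red or black edges, each character incident only to black edges (inactive) or only to red edges (active). Its associated matrix has $M[s,c]=1$ iff $(s,c)$ is black, or $c$ is active and $(s,c)$ is not an edge; a tree solving the graph is a persistent phylogeny for (associated matrix,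 set of active characters). $S(c)=\{s:M[s,c]=1\}$. Two characters $c,c'$ overlap if $S(c)\cap S(c')\neq\emptyset$ and neither of $S(c),S(c')$ contains the other; they are conflicting if the pairs $(M[s,c],M[s,c'])$, $s\in S$, take all four values $(0,0),(0,1),(1,0),(1,1)$. Realizing $c^+$ ($c$ inactive): with $D(c)$ the species of the component of $c$, add red edges from $c$ to $D(c)\setminus N(c)$, delete black edges on $c$ and isolated vertices; realizing $c^-$ ($c$ active, $D(c)\subseteq N(c)$): delete all edges on $c$ and isolated vertices. An active character red-adjacent to all species is free. A c-reduction $\langle c_1^+,\dots,c_k^+\rangle$ is successful if realizing the characters in order is always defined (realizing negatively each character right after it becomes free) and yields the empty graph. A red-black graph is reducible if it is connected and admits a successful reduction (i.e. is solved by some persistent phylogeny). Standing assumption: no free, null (isolated) or universal (inactive and black-adjacent to all species) characters, no species with no characters, no two identical character columns. An inactive character $c$ is maximal if no inactive $c'$ has $S(c)\subsetneq S(c')$. A maximal reducible graph is a reducible red-black graph all of whose characters are inactive and maximal. *)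

theory Defs
  imports Main
begin

text \<open>The edge entering a non-root node x is the edge (par x, x); edges are identified
  with their lower endpoint x.\<close>

definition rooted_tree :: "'v set \<Rightarrow> 'v \<Rightarrow> ('v \<Rightarrow> 'v) \<Rightarrow> bool" where
  "rooted_tree V r par \<longleftrightarrow> finite V \<and> r \<in> V \<and> par r = r \<and> (\<forall>x\<in>V. par x \<in> V)
     \<and> (\<forall>x\<in>V. \<exists>n. (par ^^ n) x = r)"

definition anc :: "('v \<Rightarrow> 'v) \<Rightarrow> 'v \<Rightarrow> 'v \<Rightarrow> bool" where
  "anc par x y \<longleftrightarrow> (\<exists>n. (par ^^ n) y = x)"

definition proper_anc :: "('v \<Rightarrow> 'v) \<Rightarrow> 'v \<Rightarrow> 'v \<Rightarrow> bool" where
  "proper_anc par x y \<longleftrightarrow> anc par x y \<and> x \<noteq> y"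

text \<open>The edge entering x is labelled c^+ (gain) resp. c^- (loss).\<close>
definition gain_edge :: "'v set \<Rightarrow> 'v \<Rightarrow> ('v \<Rightarrow> 'v) \<Rightarrow> ('v \<Rightarrow> 'c \<Rightarrow> bool) \<Rightarrow> 'c \<Rightarrow> 'v \<Rightarrow> bool" where
  "gain_edge V r par l c x \<longleftrightarrow> x \<in> V \<and> x \<noteq> r \<and> \<not> l (par x) c \<and> l x c"

definition loss_edge :: "'v set \<Rightarrow> 'v \<Rightarrow> ('v \<Rightarrow> 'v) \<Rightarrow> ('v \<Rightarrow> 'c \<Rightarrow> bool) \<Rightarrow> 'c \<Rightarrow> 'v \<Rightarrow> bool" where
  "loss_edge V r par l c x \<longleftrightarrow> x \<in> V \<and> x \<noteq> r \<and> l (par x) c \<and> \<not> l x c"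

definition change_edges :: "'v set \<Rightarrow> 'v \<Rightarrow> ('v \<Rightarrow> 'v) \<Rightarrow> ('v \<Rightarrow> 'c \<Rightarrow> bool) \<Rightarrow> 'c \<Rightarrow> 'v set" where
  "change_edges V r par l c = {x \<in> V. x \<noteq> r \<and> l (par x) c \<noteq> l x c}"

definition species_node :: "'s set \<Rightarrow> 'c set \<Rightarrow> ('s \<Rightarrow> 'c \<Rightarrow> bool) \<Rightarrow> 'v set \<Rightarrow> ('v \<Rightarrow> 'c \<Rightarrow> bool) \<Rightarrow> 'v \<Rightarrow> bool" where
  "species_node S C M V l x \<longleftrightarrow> x \<in> V \<and> (\<exists>s\<in>S. \<forall>c\<in>C. l x c = M s c)"

definition persistent_phylogeny ::
  "'s set \<Rightarrow> 'c set \<Rightarrow> ('s \<Rightarrow> 'c \<Rightarrow> bool) \<Rightarrow> 'c set \<Rightarrow>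
   'v set \<Rightarrow> 'v \<Rightarrow> ('v \<Rightarrow> 'v) \<Rightarrow> ('v \<Rightarrow> 'c \<Rightarrow> bool) \<Rightarrow> bool" where
  "persistent_phylogeny S C M A V r par l \<longleftrightarrow>
     rooted_tree V r par
   \<and> (\<forall>c\<in>C. l r c \<longleftrightarrow> c \<in> A)
   \<and> (\<forall>c\<in>C. card (change_edges V r par l c) \<le> 2
         \<and> (card (change_edges V r par l c) = 2 \<longrightarrow>
              (\<exists>x y. change_edges V r par l c = {x, y} \<and> proper_anc par x y
                     \<and> gain_edge V r par l c x \<and> loss_edge V r par l c y)))
   \<and> (\<forall>s\<in>S. \<exists>x\<in>V. \<forall>c\<in>C. l x c = M s c)"

text \<open>A red-black graph on species S and characters C is given by its edge set E
  and its set Act of active characters: edges on active characters are red,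
  edges on inactive characters are black.\<close>

definition rb_graph :: "'s set \<Rightarrow> 'c set \<Rightarrow> ('s \<times> 'c) set \<Rightarrow> 'c set \<Rightarrow> bool" where
  "rb_graph S C E Act \<longleftrightarrow> finite S \<and> finite C \<and> E \<subseteq> S \<times> C \<and> Act \<subseteq> C"

definition rb_matrix :: "('s \<times> 'c) set \<Rightarrow> 'c set \<Rightarrow> 's \<Rightarrow> 'c \<Rightarrow> bool" where
  "rb_matrix E Act s c \<longleftrightarrow> ((s, c) \<in> E \<and> c \<notin> Act) \<or> (c \<in> Act \<and> (s, c) \<notin> E)"

definition rb_solves ::
  "'s set \<Rightarrow> 'c set \<Rightarrow> ('s \<times> 'c) set \<Rightarrow> 'c set \<Rightarrow>
   'v set \<Rightarrow> 'v \<Rightarrow> ('v \<Rightarrow> 'v) \<Rightarrow> ('v \<Rightarrow> 'c \<Rightarrow> bool) \<Rightarrow> bool" where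
  "rb_solves S C E Act V r par l \<longleftrightarrow> persistent_phylogeny S C (rb_matrix E Act) Act V r par l"

definition rb_connected :: "'s set \<Rightarrow> 'c set \<Rightarrow> ('s \<times> 'c) set \<Rightarrow> bool" where
  "rb_connected S C E \<longleftrightarrow>
     (let R = {(Inl s, Inr c) | s c. (s, c) \<in> E} in
      \<forall>u \<in> Inl ` S \<union> Inr ` C. \<forall>v \<in> Inl ` S \<union> Inr ` C. (u, v) \<in> (R \<union> R\<inverse>)\<^sup>*)"

text \<open>Standing assumption: no free, null or universal characters, no species without
  characters, no two identical character columns.\<close>
definition rb_standing :: "'s set \<Rightarrow> 'c set \<Rightarrow> ('s \<times> 'c) set \<Rightarrow> 'c set \<Rightarrow> bool" where
  "rb_standing S C E Act \<longleftrightarrow>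
     (\<forall>c\<in>Act. \<not> (\<forall>s\<in>S. (s, c) \<in> E))
   \<and> (\<forall>c\<in>C. \<exists>s\<in>S. (s, c) \<in> E)
   \<and> (\<forall>c\<in>C - Act. \<not> (\<forall>s\<in>S. (s, c) \<in> E))
   \<and> (\<forall>s\<in>S. \<exists>c\<in>C. (s, c) \<in> E)
   \<and> (\<forall>c\<in>C. \<forall>c'\<in>C. c \<noteq> c' \<longrightarrow> (\<exists>s\<in>S. rb_matrix E Act s c \<noteq> rb_matrix E Act s c'))"

text \<open>Reducible: connected and solved by some persistent phylogeny (node type nat
  is used for the witness tree; any finite tree can be relabelled so).\<close>
definition reducible :: "'s set \<Rightarrow> 'c set \<Rightarrow> ('s \<times> 'c) set \<Rightarrow> 'c set \<Rightarrow> bool" where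
  "reducible S C E Act \<longleftrightarrow> rb_graph S C E Act \<and> rb_connected S C E
     \<and> (\<exists>(V::nat set) r par l. rb_solves S C E Act V r par l)"

definition charS :: "'s set \<Rightarrow> ('s \<Rightarrow> 'c \<Rightarrow> bool) \<Rightarrow> 'c \<Rightarrow> 's set" where
  "charS S M c = {s \<in> S. M s c}"

definition overlap :: "'s set \<Rightarrow> ('s \<Rightarrow> 'c \<Rightarrow> bool) \<Rightarrow> 'c \<Rightarrow> 'c \<Rightarrow> bool" where
  "overlap S M c c' \<longleftrightarrow> charS S M c \<inter> charS S M c' \<noteq> {}
     \<and> \<not> charS S M c \<subseteq> charS S M c' \<and> \<not> charS S M c' \<subseteq> charS S M c"

definition conflicting :: "'s set \<Rightarrow> ('s \<Rightarrow> 'c \<Rightarrow> bool) \<Rightarrow> 'c \<Rightarrow> 'c \<Rightarrow> bool" where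
  "conflicting S M c c' \<longleftrightarrow>
     (\<forall>a b. \<exists>s\<in>S. M s c = a \<and> M s c' = b)"

definition maximal_char :: "'s set \<Rightarrow> 'c set \<Rightarrow> ('s \<times> 'c) set \<Rightarrow> 'c set \<Rightarrow> 'c \<Rightarrow> bool" where
  "maximal_char S C E Act c \<longleftrightarrow> c \<in> C - Act \<and>
     \<not> (\<exists>c'\<in>C - Act. charS S (rb_matrix E Act) c \<subset> charS S (rb_matrix E Act) c')"

definition maximal_reducible :: "'s set \<Rightarrow> 'c set \<Rightarrow> ('s \<times> 'c) set \<Rightarrow> 'c set \<Rightarrow> bool" where
  "maximal_reducible S C E Act \<longleftrightarrow> rb_graph S C E Act \<and> rb_standing S C E Act
     \<and> reducible S C E Act \<and> Act = {} \<and> (\<forall>c\<in>C. maximal_char S C E Act c)"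

end

theory Submission
  imports Defs
begin


locale rt =
  fixes V :: "'v set" and r :: 'v and par :: "'v \<Rightarrow> 'v"
  assumes tree: "rooted_tree V r par"
begin

lemma fin: "finite V" and rV: "r \<in> V" and parr: "par r = r"
  and parV: "x \<in> V \<Longrightarrow> par x \<in> V" and reach: "x \<in> V \<Longrightarrow> \<exists>n. (par ^^ n) x = r"
  using tree unfolding rooted_tree_def by auto

lemma funpow_r: "(par ^^ n) r = r"
  by (induction n) (auto simp: parr)

lemma funpow_V: "x \<in> V \<Longrightarrow> (par ^^ n) x \<in> V"
  by (induction n) (auto simp: parV)

lemma anc_refl[simp]: "anc par x x"
  unfolding anc_def by (rule exI[of _ 0]) simp

lemma anc_trans: "anc par x y \<Longrightarrow> anc par y z \<Longrightarrow> anc par x z"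
  unfolding anc_def by (metis funpow_add comp_apply)

lemma anc_par: "anc par (par y) y"
  unfolding anc_def by (rule exI[of _ 1]) simp

lemma anc_V: "y \<in> V \<Longrightarrow> anc par x y \<Longrightarrow> x \<in> V"
  unfolding anc_def using funpow_V by blast

lemma anc_root: "y \<in> V \<Longrightarrow> anc par r y"
  unfolding anc_def using reach by blast

lemma anc_comp: "anc par x y \<Longrightarrow> anc par z y \<Longrightarrow> anc par x z \<or> anc par z x"
proof -
  assume "anc par x y" "anc par z y"
  then obtain n m where n: "(par ^^ n) y = x" and m: "(par ^^ m) y = z" unfolding anc_def by blast
  show ?thesis
  proof (cases "n \<le> m")
    case True
    then have "(par ^^ (m - n)) x = z" using n m
      by (metis funpow_add le_add_diff_inverse2 comp_apply)
    then show ?thesis unfolding anc_def by blast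
  next
    case False
    then have "(par ^^ (n - m)) z = x" using n m
      by (metis funpow_add le_add_diff_inverse2 comp_apply nat_le_linear)
    then show ?thesis unfolding anc_def by blast
  qed
qed

lemma periodic: assumes "(par ^^ p) y = y" shows "(par ^^ (k * p)) y = y"
  using assms by (induction k) (auto simp: funpow_add)

lemma anc_antisym: assumes "y \<in> V" "anc par x y" "anc par y x" shows "x = y"
proof -
  obtain n m where n: "(par ^^ n) y = x" and m: "(par ^^ m) x = y" using assms unfolding anc_def by blast
  have p: "(par ^^ (m + n)) y = y" using n m by (simp add: funpow_add)
  show ?thesis
  proof (cases "m + n = 0")
    case True then show ?thesis using n by simp
  next
    case False
    obtain N where N: "(par ^^ N) y = r" using reach assms(1) by blast
    have "(par ^^ (N * (m + n))) y = y" using periodic p by blast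
    moreover have "N \<le> N * (m + n)" using False by (cases "m + n") auto
    then have "(par ^^ (N * (m + n))) y = (par ^^ (N * (m + n) - N)) ((par ^^ N) y)"
      by (metis funpow_add le_add_diff_inverse2 comp_apply)
    ultimately have "y = r" using N funpow_r by simp
    then show ?thesis using n funpow_r by simp
  qed
qed

lemma anc_step: "anc par x y \<Longrightarrow> x \<noteq> y \<Longrightarrow> anc par x (par y)"
  unfolding anc_def
proof -
  assume "\<exists>n. (par ^^ n) y = x" "x \<noteq> y"
  then obtain n where n: "(par ^^ n) y = x" by blast
  with \<open>x \<noteq> y\<close> obtain k where "n = Suc k" by (cases n) auto
  then have "(par ^^ k) (par y) = x" using n by (simp add: funpow_Suc_right del: funpow.simps)
  then show "\<exists>n. (par ^^ n) (par y) = x" by blast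
qed

end



context rt begin

lemma path_change:
  assumes "y \<in> V" "(par ^^ n) y = z" "l z ch \<noteq> l y ch"
  shows "\<exists>w. w \<in> change_edges V r par l ch \<and> proper_anc par z w \<and> anc par w y"
  using assms
proof (induction n arbitrary: y)
  case 0 then show ?case by simp
next
  case (Suc n)
  have pz: "(par ^^ n) (par y) = z" using Suc.prems(2) by (simp add: funpow_Suc_right del: funpow.simps)
  have ancz: "anc par z y" using Suc.prems(2) unfolding anc_def by blast
  show ?case
  proof (cases "l (par y) ch = l y ch")
    case True
    then obtain w where w: "w \<in> change_edges V r par l ch" "proper_anc par z w" "anc par w (par y)"
      using Suc.IH[OF parV[OF Suc.prems(1)] pz] Suc.prems(3) by auto
    have "anc par w y" using anc_trans[OF w(3) anc_par] .
    then show ?thesis using w(1,2) by blast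
  next
    case False
    then have "y \<noteq> r" using parr by auto
    then have "y \<in> change_edges V r par l ch" using False Suc.prems(1) unfolding change_edges_def by auto
    moreover have "proper_anc par z y" using ancz Suc.prems(3) unfolding proper_anc_def by auto
    ultimately show ?thesis by auto
  qed
qed

lemma path_change':
  assumes "y \<in> V" "anc par z y" "l z ch \<noteq> l y ch"
  shows "\<exists>w. w \<in> change_edges V r par l ch \<and> proper_anc par z w \<and> anc par w y"
proof -
  obtain n where n: "(par ^^ n) y = z" using assms(2) unfolding anc_def by blast
  show ?thesis by (rule path_change[where l=l and ch=ch, OF assms(1) n assms(3)])
qed

end

locale pp = rt V r par for V :: "'v set" and r and par +
  fixes l :: "'v \<Rightarrow> 'c \<Rightarrow> bool" and C :: "'c set"
  assumes root0: "\<forall>c\<in>C. \<not> l r c"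
  and chg: "\<forall>c\<in>C. card (change_edges V r par l c) \<le> 2
         \<and> (card (change_edges V r par l c) = 2 \<longrightarrow>
              (\<exists>x y. change_edges V r par l c = {x, y} \<and> proper_anc par x y
                     \<and> gain_edge V r par l c x \<and> loss_edge V r par l c y))"
begin

abbreviation "gain \<equiv> gain_edge V r par l"
abbreviation "loss \<equiv> loss_edge V r par l"

lemma gain_ch: "gain ch x \<Longrightarrow> x \<in> change_edges V r par l ch"
  unfolding gain_edge_def change_edges_def by auto
lemma loss_ch: "loss ch x \<Longrightarrow> x \<in> change_edges V r par l ch"
  unfolding loss_edge_def change_edges_def by auto
lemma ch_gl: "x \<in> change_edges V r par l ch \<Longrightarrow> gain ch x \<or> loss ch x"
  unfolding gain_edge_def loss_edge_def change_edges_def by auto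
lemma gain_V: "gain ch x \<Longrightarrow> x \<in> V" unfolding gain_edge_def by auto
lemma loss_V: "loss ch x \<Longrightarrow> x \<in> V" unfolding loss_edge_def by auto
lemma not_gl: "gain ch x \<Longrightarrow> loss ch x \<Longrightarrow> False" unfolding gain_edge_def loss_edge_def by auto

lemma no_change_eq:
  assumes "y \<in> V" "anc par z y" "\<And>w. w \<in> change_edges V r par l ch \<Longrightarrow> proper_anc par z w \<Longrightarrow> anc par w y \<Longrightarrow> False"
  shows "l z ch = l y ch"
proof (rule ccontr)
  assume ne: "l z ch \<noteq> l y ch"
  obtain w where "w \<in> change_edges V r par l ch" "proper_anc par z w" "anc par w y"
    using path_change'[where l=l and ch=ch, OF assms(1,2) ne] by blast
  then show False by (rule assms(3))
qed

lemma char_cases: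
  assumes ch: "ch \<in> C"
  shows "(change_edges V r par l ch = {} \<and> (\<forall>y\<in>V. \<not> l y ch))
    \<or> (\<exists>g. change_edges V r par l ch = {g} \<and> gain ch g \<and> (\<forall>y\<in>V. l y ch \<longleftrightarrow> anc par g y))
    \<or> (\<exists>g h. change_edges V r par l ch = {g, h} \<and> gain ch g \<and> loss ch h \<and> proper_anc par g h
          \<and> (\<forall>y\<in>V. l y ch \<longleftrightarrow> anc par g y \<and> \<not> anc par h y))"
proof -
  let ?Ch = "change_edges V r par l ch"
  have finCh: "finite ?Ch" using fin unfolding change_edges_def by auto
  have r0: "\<not> l r ch" using root0 ch by auto
  have c2: "card ?Ch \<le> 2" using chg ch by auto
  then consider "card ?Ch = 0" | "card ?Ch = 1" | "card ?Ch = 2" by linarith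
  then show ?thesis
  proof cases
    case 1
    then have e: "?Ch = {}" using finCh by simp
    have "\<forall>y\<in>V. \<not> l y ch"
    proof
      fix y assume y: "y \<in> V"
      have "l r ch = l y ch" by (rule no_change_eq[OF y anc_root[OF y]]) (use e in auto)
      then show "\<not> l y ch" using r0 by simp
    qed
    then show ?thesis using e by (intro disjI1 conjI)
  next
    case 2
    then obtain g where e: "?Ch = {g}" using card_1_singletonE by blast
    have gCh: "g \<in> ?Ch" using e by simp
    then have gV: "g \<in> V" "g \<noteq> r" "l (par g) ch \<noteq> l g ch" unfolding change_edges_def by auto
    have "l (par g) ch = l r ch"
    proof (rule sym, rule no_change_eq[OF parV[OF gV(1)] anc_root[OF parV[OF gV(1)]]])
      fix w assume "w \<in> ?Ch" "proper_anc par r w" "anc par w (par g)"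
      then have "w = g" using e by auto
      then have "anc par g (par g)" using \<open>anc par w (par g)\<close> by simp
      then have "par g = g" using anc_antisym[OF gV(1) anc_par] by simp
      then show False using gV(3) by simp
    qed
    then have gg: "gain ch g" using r0 gV unfolding gain_edge_def by auto
    have "\<forall>y\<in>V. l y ch \<longleftrightarrow> anc par g y"
    proof
      fix y assume y: "y \<in> V"
      show "l y ch \<longleftrightarrow> anc par g y"
      proof (cases "anc par g y")
        case True
        have "l g ch = l y ch"
          by (rule no_change_eq[OF y True]) (use e in \<open>auto simp: proper_anc_def\<close>)
        then show ?thesis using gg True unfolding gain_edge_def by auto
      next
        case False
        have "l r ch = l y ch"
          by (rule no_change_eq[OF y anc_root[OF y]]) (use e False in auto)
        then show ?thesis using r0 False by auto
      qed
    qed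
    then show ?thesis using e gg by (intro disjI2 disjI1 exI[of _ g] conjI)
  next
    case 3
    then obtain g h where e: "?Ch = {g, h}" and gh: "proper_anc par g h" and gg: "gain ch g"
      and lh: "loss ch h" using chg ch by blast
    have gV: "g \<in> V" using gain_V gg by auto
    have hng: "\<not> anc par h g" using gh anc_antisym[OF gV] unfolding proper_anc_def by blast
    have "\<forall>y\<in>V. l y ch \<longleftrightarrow> anc par g y \<and> \<not> anc par h y"
    proof
      fix y assume y: "y \<in> V"
      show "l y ch \<longleftrightarrow> anc par g y \<and> \<not> anc par h y"
      proof (cases "anc par h y")
        case True
        have "l h ch = l y ch"
          by (rule no_change_eq[OF y True]) (use e hng in \<open>auto simp: proper_anc_def\<close>)
        then show ?thesis using lh True unfolding loss_edge_def by auto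
      next
        case hy: False
        show ?thesis
        proof (cases "anc par g y")
          case True
          have "l g ch = l y ch"
            by (rule no_change_eq[OF y True]) (use e hy in \<open>auto simp: proper_anc_def\<close>)
          then show ?thesis using gg True hy unfolding gain_edge_def by auto
        next
          case False
          have "l r ch = l y ch"
            by (rule no_change_eq[OF y anc_root[OF y]])
               (use e False hy in auto)
          then show ?thesis using r0 False by auto
        qed
      qed
    qed
    then show ?thesis using e gg lh gh by (intro disjI2 exI[of _ g] exI[of _ h] conjI)
  qed
qed

lemma gain_unique: assumes "ch \<in> C" "gain ch x" "gain ch x'" shows "x = x'"
  using char_cases[OF assms(1)]
proof (elim disjE exE conjE)
  assume "change_edges V r par l ch = {}" then show ?thesis using gain_ch[OF assms(2)] by auto
next
  fix g assume "change_edges V r par l ch = {g}" then show ?thesis using gain_ch[OF assms(2)] gain_ch[OF assms(3)] by auto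
next
  fix g h assume e: "change_edges V r par l ch = {g, h}" "loss ch h"
  have "x \<noteq> h" "x' \<noteq> h" using not_gl[of ch h] assms(2,3) e(2) by auto
  then show ?thesis using gain_ch[OF assms(2)] gain_ch[OF assms(3)] e(1) by auto
qed

lemma loss_unique: assumes "ch \<in> C" "loss ch x" "loss ch x'" shows "x = x'"
  using char_cases[OF assms(1)]
proof (elim disjE exE conjE)
  assume "change_edges V r par l ch = {}" then show ?thesis using loss_ch[OF assms(2)] by auto
next
  fix g assume e: "change_edges V r par l ch = {g}" "gain ch g"
  then have "x = g" using loss_ch[OF assms(2)] by auto
  then show ?thesis using not_gl[of ch g] assms(2) e(2) by blast
next
  fix g h assume e: "change_edges V r par l ch = {g, h}" "gain ch g"
  have "x \<noteq> g" "x' \<noteq> g" using not_gl[of ch g] assms(2,3) e(2) by auto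
  then show ?thesis using loss_ch[OF assms(2)] loss_ch[OF assms(3)] e(1) by auto
qed

lemma loss_gain: assumes "ch \<in> C" "loss ch h" shows "\<exists>g. gain ch g \<and> proper_anc par g h"
  using char_cases[OF assms(1)]
proof (elim disjE exE conjE)
  assume "change_edges V r par l ch = {}" then show ?thesis using loss_ch[OF assms(2)] by auto
next
  fix g assume e: "change_edges V r par l ch = {g}" "gain ch g"
  then have "h = g" using loss_ch[OF assms(2)] by auto
  then show ?thesis using not_gl[of ch g] assms(2) e(2) by blast
next
  fix g h' assume "change_edges V r par l ch = {g, h'}" "gain ch g" "loss ch h'" "proper_anc par g h'"
  then show ?thesis using loss_unique[OF assms(1,2)] by blast
qed

lemma val_nogain: assumes "ch \<in> C" "\<not> (\<exists>g. gain ch g)" "y \<in> V" shows "\<not> l y ch"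
  using char_cases[OF assms(1)]
proof (elim disjE exE conjE)
  assume "\<forall>y\<in>V. \<not> l y ch" then show ?thesis using assms(3) by simp
next
  fix g assume "gain ch g" then show ?thesis using assms(2) by blast
next
  fix g h assume "gain ch g" then show ?thesis using assms(2) by blast
qed

lemma val: assumes "ch \<in> C" "gain ch g" "y \<in> V"
  shows "l y ch \<longleftrightarrow> anc par g y \<and> \<not> (\<exists>h. loss ch h \<and> anc par h y)"
proof -
  from char_cases[OF assms(1)] show ?thesis
  proof (elim disjE exE conjE)
    assume "change_edges V r par l ch = {}" 
    then show ?thesis using gain_ch[OF assms(2)] by simp
  next
    fix g' assume e: "change_edges V r par l ch = {g'}" and v: "\<forall>y\<in>V. l y ch = anc par g' y"
    have lv: "l y ch \<longleftrightarrow> anc par g' y" using v assms(3) by blast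
    have gg: "g = g'" using e gain_ch[OF assms(2)] by simp
    have nl: "\<not> loss ch h" for h
    proof
      assume lh: "loss ch h"
      then have "h = g" using e loss_ch[of ch h] gg by simp
      then show False using not_gl[of ch g] assms(2) lh by simp
    qed
    show ?thesis using lv gg nl by blast
  next
    fix g' h assume e: "change_edges V r par l ch = {g', h}" "gain ch g'" "loss ch h"
      and v: "\<forall>y\<in>V. l y ch = (anc par g' y \<and> \<not> anc par h y)"
    have lv: "l y ch \<longleftrightarrow> anc par g' y \<and> \<not> anc par h y" using v assms(3) by blast
    have gg: "g = g'" using gain_unique[OF assms(1,2) e(2)] .
    have hh: "(\<exists>h'. loss ch h' \<and> anc par h' y) \<longleftrightarrow> anc par h y"
    proof
      assume "\<exists>h'. loss ch h' \<and> anc par h' y"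
      then obtain h' where "loss ch h'" "anc par h' y" by blast
      moreover have "h' = h" using loss_unique[OF assms(1) \<open>loss ch h'\<close> e(3)] .
      ultimately show "anc par h y" by simp
    next
      assume "anc par h y" then show "\<exists>h'. loss ch h' \<and> anc par h' y" using e(3) by blast
    qed
    show ?thesis using lv gg hh by simp
  qed
qed

end



lemma M_simp: "rb_matrix E {} s ch \<longleftrightarrow> (s, ch) \<in> E"
  unfolding rb_matrix_def by auto

lemma linking:
  fixes E :: "('s \<times> 'c) set"
  assumes EC: "E \<subseteq> S \<times> C" and conn: "rb_connected S C E" and i0: "i0 \<in> I" "I \<subseteq> S"
    and o0: "o0 \<in> S" "o0 \<notin> I"
  shows "\<exists>s1 s2 d. s1 \<in> I \<and> s2 \<in> S \<and> s2 \<notin> I \<and> (s1, d) \<in> E \<and> (s2, d) \<in> E"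
proof (rule ccontr)
  assume nl: "\<not> ?thesis"
  define R :: "('s + 'c) rel" where "R = {(Inl s, Inr c) | s c. (s, c) \<in> E}"
  define X where "X = Inl ` I \<union> Inr ` {d. \<exists>s\<in>I. (s, d) \<in> E}"
  have path: "(Inl i0, Inl o0) \<in> (R \<union> R\<inverse>)\<^sup>*"
    using conn i0 o0 unfolding rb_connected_def R_def Let_def by auto
  have "(Inl i0, v) \<in> (R \<union> R\<inverse>)\<^sup>* \<Longrightarrow> v \<in> X" for v
  proof (induction rule: rtrancl_induct)
    case base then show ?case using i0 unfolding X_def by auto
  next
    case (step u v)
    from step.hyps(2) show ?case
    proof
      assume "(u, v) \<in> R"
      then obtain s d where "u = Inl s" "v = Inr d" "(s, d) \<in> E" unfolding R_def by auto
      then show ?thesis using step.IH unfolding X_def by auto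
    next
      assume "(u, v) \<in> R\<inverse>"
      then obtain s d where uv: "v = Inl s" "u = Inr d" "(s, d) \<in> E" unfolding R_def by auto
      then obtain s' where s': "s' \<in> I" "(s', d) \<in> E" using step.IH unfolding X_def by auto
      have "s \<in> S" using uv EC by auto
      then have "s \<in> I" using nl s' uv by blast
      then show ?thesis using uv unfolding X_def by auto
    qed
  qed
  from this[OF path] have "o0 \<in> I" unfolding X_def by auto
  then show False using o0 by simp
qed

context pp begin

lemma species_above:
  fixes S :: "'s set" and E :: "('s \<times> 'c) set"
  assumes EC: "E \<subseteq> S \<times> C" and conn: "rb_connected S C E"
    and maxall: "\<forall>x\<in>C. \<forall>y\<in>C. \<not> (charS S (rb_matrix E {}) x \<subset> charS S (rb_matrix E {}) y)"
    and real: "\<forall>s\<in>S. \<exists>x\<in>V. \<forall>ch\<in>C. l x ch = rb_matrix E {} s ch"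
    and cC: "c \<in> C" and gc: "gain c g"
    and IS: "I \<subseteq> S"
    and inI: "\<forall>s\<in>I. \<forall>y\<in>V. (\<forall>ch\<in>C. l y ch = rb_matrix E {} s ch) \<longrightarrow> anc par g y"
    and outI: "\<forall>s\<in>S - I. \<forall>y\<in>V. (\<forall>ch\<in>C. l y ch = rb_matrix E {} s ch) \<longrightarrow> \<not> anc par g y"
    and cI: "charS S (rb_matrix E {}) c \<subseteq> I" and u: "u \<in> I" "u \<notin> charS S (rb_matrix E {}) c"
    and o0: "o0 \<in> S" "o0 \<notin> I"
  shows "\<exists>z. species_node S C (rb_matrix E {}) V l z \<and> proper_anc par z g"
proof -
  let ?M = "rb_matrix E {}"
  have memS: "s \<in> charS S ?M ch \<longleftrightarrow> s \<in> S \<and> (s, ch) \<in> E" for s ch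
    unfolding charS_def M_simp by auto
  have gV: "g \<in> V" using gc gain_V by auto
  obtain s1 s2 d where s12: "s1 \<in> I" "s2 \<in> S" "s2 \<notin> I" "(s1, d) \<in> E" "(s2, d) \<in> E"
    using linking[OF EC conn u(1) IS o0] by blast
  have dC: "d \<in> C" using s12 EC by auto
  obtain x1 where x1: "x1 \<in> V" "\<forall>ch\<in>C. l x1 ch = ?M s1 ch" using real s12 IS by blast
  obtain e where e: "e \<in> V" "\<forall>ch\<in>C. l e ch = ?M s2 ch" using real s12 by blast
  have lx1: "l x1 d" using x1 dC s12 by (simp add: M_simp)
  have le: "l e d" using e dC s12 by (simp add: M_simp)
  have gx1: "anc par g x1" using inI s12 x1 by blast
  have nge: "\<not> anc par g e" using outI s12 e by blast
  obtain k where gk: "gain d k" using val_nogain[OF dC _ x1(1)] lx1 by blast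
  have kx1: "anc par k x1" and ke: "anc par k e" using val[OF dC gk] lx1 le x1 e by auto
  have kg: "anc par k g" using anc_comp[OF kx1 gx1] anc_trans[of g k e] ke nge by blast
  have allTg: "\<And>ch s. ch \<in> C \<Longrightarrow> (\<forall>y\<in>V. anc par g y \<longrightarrow> l y ch) \<Longrightarrow> s \<in> I \<Longrightarrow> (s, ch) \<in> E"
  proof -
    fix ch s assume ch: "ch \<in> C" "\<forall>y\<in>V. anc par g y \<longrightarrow> l y ch" "s \<in> I"
    obtain y where y: "y \<in> V" "\<forall>ch\<in>C. l y ch = ?M s ch" using real ch(3) IS by blast
    have "anc par g y" using inI ch(3) y by blast
    then have "l y ch" using ch y by blast
    then show "(s, ch) \<in> E" using y ch by (simp add: M_simp)
  qed
  have maxc: "\<not> (charS S ?M c \<subset> charS S ?M ch)" if "ch \<in> C" for ch using maxall cC that by blast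
  obtain hd where hd: "loss d hd" "anc par g hd"
  proof (rule ccontr)
    assume nh: "\<not> thesis"
    have "\<forall>y\<in>V. anc par g y \<longrightarrow> l y d"
    proof (intro ballI impI)
      fix y assume y: "y \<in> V" "anc par g y"
      have "anc par k y" using kg y anc_trans by blast
      moreover have "\<not> (\<exists>h. loss d h \<and> anc par h y)"
      proof
        assume "\<exists>h. loss d h \<and> anc par h y"
        then obtain h where h: "loss d h" "anc par h y" by blast
        have "\<not> anc par g h" using nh h that by blast
        then have "anc par h g" using anc_comp[OF h(2) y(2)] by blast
        then have "anc par h x1" using gx1 anc_trans by blast
        then show False using val[OF dC gk x1(1)] lx1 h by blast
      qed
      ultimately show "l y d" using val[OF dC gk y(1)] by blast
    qed
    then have "\<forall>s\<in>I. (s, d) \<in> E" using allTg dC by blast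
    then have "charS S ?M c \<subseteq> charS S ?M d" using cI memS by blast
    moreover have "s2 \<in> charS S ?M d" "s2 \<notin> charS S ?M c" using s12 memS cI by auto
    ultimately show False using maxc[OF dC] by blast
  qed
  define P where "P n = anc par ((par ^^ n) e) g" for n
  obtain N where N: "(par ^^ N) e = r" using reach e(1) by blast
  have PN: "P N" unfolding P_def N using anc_root gV by simp
  define n0 where "n0 = (LEAST n. P n)"
  define a where "a = (par ^^ n0) e"
  have ag: "anc par a g" using LeastI[of P, OF PN] unfolding a_def n0_def P_def by simp
  have ae: "anc par a e" unfolding a_def anc_def by blast
  have aV: "a \<in> V" using anc_V[OF e(1) ae] .
  have low: "anc par x a" if a1: "anc par x e" and a2: "anc par x g" for x
  proof -
    obtain m where m: "(par ^^ m) e = x" using a1 unfolding anc_def by blast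
    have "P m" using a2 m unfolding P_def by simp
    then have "n0 \<le> m" unfolding n0_def by (rule Least_le)
    then have "(par ^^ (m - n0)) a = x" unfolding a_def using m
      by (metis funpow_add le_add_diff_inverse2 comp_apply)
    then show ?thesis unfolding anc_def by blast
  qed
  have zone: "\<not> anc par w g" if "anc par w e" "proper_anc par a w" for w
  proof
    assume "anc par w g"
    then have "anc par w a" using low that by blast
    then have "w = a" using anc_antisym[OF aV] that unfolding proper_anc_def by blast
    then show False using that unfolding proper_anc_def by blast
  qed
  have ka: "anc par k a" using low ke kg by blast
  have ang: "a \<noteq> g" using ae nge by blast
  have nogain: False if ch: "ch \<in> C" "gain ch w" "anc par w e" "proper_anc par a w" for ch w
  proof -
    have sub: "s \<notin> I \<and> (s, d) \<in> E" if s: "s \<in> charS S ?M ch" for s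
    proof -
      have sS: "s \<in> S" "(s, ch) \<in> E" using s memS by auto
      obtain y where y: "y \<in> V" "\<forall>ch\<in>C. l y ch = ?M s ch" using real sS by blast
      have "l y ch" using y ch sS by (simp add: M_simp)
      then have wy: "anc par w y" using val[OF ch(1,2) y(1)] by blast
      have ngy: "\<not> anc par g y"
      proof
        assume gy: "anc par g y"
        from anc_comp[OF wy gy] show False
          using zone[OF ch(3,4)] anc_trans[of g w e] ch(3) nge by blast
      qed
      then have "s \<notin> I" using inI y by blast
      moreover have "l y d"
      proof -
        have "anc par k y" using ka ch(4) wy anc_trans unfolding proper_anc_def by blast
        moreover have "\<not> (\<exists>h. loss d h \<and> anc par h y)"
          using loss_unique[OF dC hd(1)] hd(2) anc_trans ngy by blast
        ultimately show ?thesis using val[OF dC gk y(1)] by blast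
      qed
      then have "(s, d) \<in> E" using y dC by (simp add: M_simp)
      ultimately show ?thesis by blast
    qed
    have "charS S ?M ch \<subseteq> charS S ?M d" using sub memS by blast
    moreover have "s1 \<in> charS S ?M d" "s1 \<notin> charS S ?M ch" using s12 IS memS sub by auto
    ultimately show False using maxall ch(1) dC by blast
  qed
  have eq: "l a ch = l e ch" if chC: "ch \<in> C" for ch
  proof (rule ccontr)
    assume ne: "l a ch \<noteq> l e ch"
    obtain w where w: "w \<in> change_edges V r par l ch" "proper_anc par a w" "anc par w e"
      using path_change'[where l=l and ch=ch, OF e(1) ae ne] by blast
    from ch_gl[OF w(1)] show False
    proof
      assume "gain ch w" then show False using nogain chC w by blast
    next
      assume lw: "loss ch w"
      obtain gch where gch: "gain ch gch" "proper_anc par gch w" using loss_gain[OF chC lw] by blast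
      have gche: "anc par gch e" using gch w anc_trans unfolding proper_anc_def by blast
      have gcha: "anc par gch a"
      proof (cases "anc par a gch")
        case True
        show ?thesis
        proof (cases "a = gch")
          case True then show ?thesis by simp
        next
          case False
          then show ?thesis using nogain[OF chC gch(1) gche] \<open>anc par a gch\<close> unfolding proper_anc_def by blast
        qed
      next
        case False then show ?thesis using anc_comp[OF gche ae] by blast
      qed
      have "\<forall>y\<in>V. anc par g y \<longrightarrow> l y ch"
      proof (intro ballI impI)
        fix y assume y: "y \<in> V" "anc par g y"
        have "anc par gch y" using gcha ag y anc_trans by blast
        moreover have "\<not> (\<exists>h. loss ch h \<and> anc par h y)"
        proof
          assume "\<exists>h. loss ch h \<and> anc par h y"
          then obtain h where h: "loss ch h" "anc par h y" by blast
          have "h = w" using loss_unique[OF chC h(1) lw] .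
          from anc_comp[OF h(2) y(2)] show False
            using zone[OF w(3,2)] \<open>h = w\<close> anc_trans[of g w e] w(3) nge by blast
        qed
        ultimately show "l y ch" using val[OF chC gch(1) y(1)] by blast
      qed
      then have "\<forall>s\<in>I. (s, ch) \<in> E" using allTg chC by blast
      then have "charS S ?M c \<subseteq> charS S ?M ch" "u \<in> charS S ?M ch" using cI memS u IS by auto
      then show False using maxc[OF chC] u(2) by blast
    qed
  qed
  have "species_node S C ?M V l a" unfolding species_node_def using aV s12 e eq by auto
  moreover have "proper_anc par a g" using ag ang unfolding proper_anc_def by simp
  ultimately show ?thesis by blast
qed

end



definition opt1 :: "'v set \<Rightarrow> 'v \<Rightarrow> ('v \<Rightarrow> 'v) \<Rightarrow> ('v \<Rightarrow> 'c \<Rightarrow> bool) \<Rightarrow> 'c \<Rightarrow> 'c \<Rightarrow> bool" where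
  "opt1 V r par l c c' \<longleftrightarrow>
    (\<exists>x1 x2 x3. gain_edge V r par l c x1 \<and> gain_edge V r par l c' x2 \<and> loss_edge V r par l c x3
        \<and> proper_anc par x1 x2 \<and> proper_anc par x2 x3
        \<and> ((\<exists>x4. loss_edge V r par l c' x4 \<and> proper_anc par x3 x4)
            \<or> \<not> (\<exists>x4. loss_edge V r par l c' x4)))"

definition opt3 :: "'s set \<Rightarrow> 'c set \<Rightarrow> ('s \<Rightarrow> 'c \<Rightarrow> bool) \<Rightarrow> 'v set \<Rightarrow> 'v \<Rightarrow> ('v \<Rightarrow> 'v) \<Rightarrow> ('v \<Rightarrow> 'c \<Rightarrow> bool) \<Rightarrow> 'c \<Rightarrow> 'c \<Rightarrow> bool" where
  "opt3 S C M V r par l c c' \<longleftrightarrow>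
    ((\<exists>y y'. loss_edge V r par l c y \<and> loss_edge V r par l c' y'
          \<and> \<not> anc par y y' \<and> \<not> anc par y' y)
      \<and> (conflicting S M c c' \<longrightarrow>
          (\<exists>z x x'. species_node S C M V l z
             \<and> gain_edge V r par l c x \<and> gain_edge V r par l c' x'
             \<and> proper_anc par z x \<and> proper_anc par z x')))"

lemma conflicting_sym: "conflicting S M c c' \<Longrightarrow> conflicting S M c' c"
  unfolding conflicting_def by blast

lemma opt3_sym: assumes "opt3 S C M V r par l c' c" shows "opt3 S C M V r par l c c'"
proof -
  have A: "\<exists>y y'. loss_edge V r par l c' y \<and> loss_edge V r par l c y' \<and> \<not> anc par y y' \<and> \<not> anc par y' y"
    and B: "conflicting S M c' c \<longrightarrow> (\<exists>z x x'. species_node S C M V l z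
             \<and> gain_edge V r par l c' x \<and> gain_edge V r par l c x'
             \<and> proper_anc par z x \<and> proper_anc par z x')"
    using assms unfolding opt3_def by blast+
  from A obtain y y' where y: "loss_edge V r par l c' y" "loss_edge V r par l c y'" "\<not> anc par y y'" "\<not> anc par y' y" by blast
  have A': "\<exists>y y'. loss_edge V r par l c y \<and> loss_edge V r par l c' y' \<and> \<not> anc par y y' \<and> \<not> anc par y' y"
    using y by blast
  have B': "\<exists>z x x'. species_node S C M V l z
             \<and> gain_edge V r par l c x \<and> gain_edge V r par l c' x'
             \<and> proper_anc par z x \<and> proper_anc par z x'" if cf0: "conflicting S M c c'"
  proof -
    obtain z x x' where "species_node S C M V l z" "gain_edge V r par l c' x" "gain_edge V r par l c x'"
      "proper_anc par z x" "proper_anc par z x'" using B conflicting_sym[OF cf0] by blast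
    then show ?thesis by blast
  qed
  show ?thesis unfolding opt3_def using A' B' by blast
qed

lemma overlap_sym: "overlap S M c c' \<Longrightarrow> overlap S M c' c"
  unfolding overlap_def by blast

context pp begin

lemma core:
  fixes S :: "'s set" and E :: "('s \<times> 'c) set"
  assumes EC: "E \<subseteq> S \<times> C" and conn: "rb_connected S C E"
    and maxall: "\<forall>x\<in>C. \<forall>y\<in>C. \<not> (charS S (rb_matrix E {}) x \<subset> charS S (rb_matrix E {}) y)"
    and real: "\<forall>s\<in>S. \<exists>x\<in>V. \<forall>ch\<in>C. l x ch = rb_matrix E {} s ch"
    and cC: "c \<in> C" and c'C: "c' \<in> C" and gc: "gain c g" and gc': "gain c' g'"
    and gg': "anc par g g'"
    and ovl: "overlap S (rb_matrix E {}) c c'"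
  shows "opt1 V r par l c c' \<or> opt3 S C (rb_matrix E {}) V r par l c c'"
proof -
  let ?M = "rb_matrix E {}"
  have gV: "g \<in> V" using gc gain_V by auto
  have g'V: "g' \<in> V" using gc' gain_V by auto
  obtain w where w: "w \<in> S" "?M w c" "?M w c'" using ovl unfolding overlap_def charS_def by blast
  obtain u where u: "u \<in> S" "?M u c'" "\<not> ?M u c" using ovl unfolding overlap_def charS_def by blast
  obtain v where v: "v \<in> S" "?M v c" "\<not> ?M v c'" using ovl unfolding overlap_def charS_def by blast
  obtain xw where xw: "xw \<in> V" "\<forall>ch\<in>C. l xw ch = ?M w ch" using real w(1) by blast
  obtain xu where xu: "xu \<in> V" "\<forall>ch\<in>C. l xu ch = ?M u ch" using real u(1) by blast
  obtain xv where xv: "xv \<in> V" "\<forall>ch\<in>C. l xv ch = ?M v ch" using real v(1) by blast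
  have lxw: "l xw c" "l xw c'" using xw w cC c'C by auto
  have lxu: "l xu c'" "\<not> l xu c" using xu u cC c'C by auto
  have lxv: "l xv c" "\<not> l xv c'" using xv v cC c'C by auto
  have vc_xw: "anc par g xw \<and> \<not> (\<exists>h. loss c h \<and> anc par h xw)" using val[OF cC gc xw(1)] lxw(1) by blast
  have vc'_xw: "anc par g' xw \<and> \<not> (\<exists>h. loss c' h \<and> anc par h xw)" using val[OF c'C gc' xw(1)] lxw(2) by blast
  have vc'_xu: "anc par g' xu \<and> \<not> (\<exists>h. loss c' h \<and> anc par h xu)" using val[OF c'C gc' xu(1)] lxu(1) by blast
  have gxu: "anc par g xu" using anc_trans[OF gg'] vc'_xu by blast
  obtain h where h: "loss c h" "anc par h xu" using val[OF cC gc xu(1)] lxu(2) gxu by blast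
  have hg': "\<not> anc par h g'"
  proof
    assume "anc par h g'"
    then have "anc par h xw" using anc_trans vc'_xw by blast
    then show False using vc_xw h(1) by blast
  qed
  have g'h: "anc par g' h" using anc_comp[OF h(2)] vc'_xu hg' by blast
  have pg'h: "proper_anc par g' h" using g'h hg' unfolding proper_anc_def by auto
  have vc_xv: "anc par g xv \<and> \<not> (\<exists>h. loss c h \<and> anc par h xv)" using val[OF cC gc xv(1)] lxv(1) by blast
  have outside: "\<not> anc par g y"
    if y: "y \<in> V" "\<not> l y c" "\<not> l y c'" and h': "loss c' h'" "\<not> anc par h h'" "\<not> anc par h' h" for y h'
  proof
    assume gy: "anc par g y"
    obtain hh where hh: "loss c hh" "anc par hh y" using val[OF cC gc y(1)] y(2) gy by blast
    have "hh = h" using loss_unique[OF cC hh(1) h(1)] .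
    then have hy: "anc par h y" using hh by simp
    have "anc par g' y" using anc_trans[OF g'h hy] .
    then obtain hh' where hh': "loss c' hh'" "anc par hh' y" using val[OF c'C gc' y(1)] y(3) by blast
    have "hh' = h'" using loss_unique[OF c'C hh'(1) h'(1)] .
    then have "anc par h' y" using hh' by simp
    then show False using anc_comp[OF hy] h'(2,3) by blast
  qed
  have final3: "opt3 S C ?M V r par l c c'"
    if h': "loss c' h'" "\<not> anc par h h'" "\<not> anc par h' h" for h'
  proof -
    have A: "\<exists>y y'. loss c y \<and> loss c' y' \<and> \<not> anc par y y' \<and> \<not> anc par y' y"
      using h(1) h' by blast
    have B: "\<exists>z x x'. species_node S C ?M V l z \<and> gain c x \<and> gain c' x'
             \<and> proper_anc par z x \<and> proper_anc par z x'" if cf: "conflicting S ?M c c'"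
    proof -
      obtain o0 where o0: "o0 \<in> S" "\<not> ?M o0 c" "\<not> ?M o0 c'"
        using cf unfolding conflicting_def by blast
      define I where "I = {s \<in> S. ?M s c \<or> ?M s c'}"
      have IS: "I \<subseteq> S" unfolding I_def by auto
      have inI: "\<forall>s\<in>I. \<forall>y\<in>V. (\<forall>ch\<in>C. l y ch = ?M s ch) \<longrightarrow> anc par g y"
      proof (intro ballI impI)
        fix s y assume s: "s \<in> I" and y: "y \<in> V" and ry: "\<forall>ch\<in>C. l y ch = ?M s ch"
        show "anc par g y"
        proof (cases "?M s c")
          case True
          then have "l y c" using ry cC by simp
          then show ?thesis using val[OF cC gc y] by blast
        next
          case False
          then have "?M s c'" using s unfolding I_def by simp
          then have "l y c'" using ry c'C by simp
          then have "anc par g' y" using val[OF c'C gc' y] by blast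
          then show ?thesis using anc_trans[OF gg'] by blast
        qed
      qed
      have outI: "\<forall>s\<in>S - I. \<forall>y\<in>V. (\<forall>ch\<in>C. l y ch = ?M s ch) \<longrightarrow> \<not> anc par g y"
      proof (intro ballI impI)
        fix s y assume s: "s \<in> S - I" and y: "y \<in> V" and ry: "\<forall>ch\<in>C. l y ch = ?M s ch"
        have "\<not> ?M s c" "\<not> ?M s c'" using s unfolding I_def by auto
        then have "\<not> l y c" "\<not> l y c'" using ry cC c'C by auto
        then show "\<not> anc par g y" using outside[OF y _ _ h'] by blast
      qed
      have cI: "charS S ?M c \<subseteq> I" unfolding I_def charS_def by auto
      have uI: "u \<in> I" "u \<notin> charS S ?M c" using u unfolding I_def charS_def by auto
      have oI: "o0 \<notin> I" using o0 unfolding I_def by auto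
      obtain z where z: "species_node S C ?M V l z" "proper_anc par z g"
        using species_above[OF EC conn maxall real cC gc IS inI outI cI uI o0(1) oI] by blast
      have zg': "anc par z g'" using anc_trans[OF _ gg'] z(2) unfolding proper_anc_def by blast
      have "z \<noteq> g'"
      proof
        assume "z = g'"
        then have "anc par g' g" using z(2) unfolding proper_anc_def by simp
        then have "g = g'" using anc_antisym[OF g'V gg'] by simp
        then show False using z(2) \<open>z = g'\<close> unfolding proper_anc_def by simp
      qed
      then have "proper_anc par z g'" using zg' unfolding proper_anc_def by simp
      then show ?thesis using z gc gc' by blast
    qed
    show ?thesis unfolding opt3_def using A B by blast
  qed
  show ?thesis
  proof (cases "\<exists>h'. loss c' h'")
    case True
    then obtain h' where h': "loss c' h'" by blast
    show ?thesis
    proof (cases "proper_anc par h h' \<and> g \<noteq> g'")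
      case True
      have "proper_anc par g g'" using gg' True unfolding proper_anc_def by simp
      then have "opt1 V r par l c c'" unfolding opt1_def using gc gc' h(1) pg'h True h' by blast
      then show ?thesis by simp
    next
      case False
      have nh'h: "\<not> anc par h' h"
      proof
        assume "anc par h' h"
        then have "anc par h' xu" using anc_trans h(2) by blast
        then show False using vc'_xu h' by blast
      qed
      have nhh': "\<not> anc par h h'"
      proof
        assume hh': "anc par h h'"
        have "h \<noteq> h'" using nh'h by auto
        then have "proper_anc par h h'" using hh' unfolding proper_anc_def by simp
        then have ge: "g = g'" using False by simp
        have "anc par g' xv" using vc_xv ge by simp
        then obtain hh where hh: "loss c' hh" "anc par hh xv" using val[OF c'C gc' xv(1)] lxv(2) by blast
        have "hh = h'" using loss_unique[OF c'C hh(1) h'] .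
        then have "anc par h xv" using anc_trans[OF hh'] hh(2) by simp
        then show False using vc_xv h(1) by blast
      qed
      show ?thesis using final3[OF h' nhh' nh'h] by simp
    qed
  next
    case False
    show ?thesis
    proof (cases "g = g'")
      case True
      have "anc par g' xv" using vc_xv True by simp
      then obtain hh where "loss c' hh" using val[OF c'C gc' xv(1)] lxv(2) by blast
      then show ?thesis using False by blast
    next
      case ne: False
      have "proper_anc par g g'" using gg' ne unfolding proper_anc_def by simp
      then have "opt1 V r par l c c'" unfolding opt1_def using gc gc' h(1) pg'h False by blast
      then show ?thesis by simp
    qed
  qed
qed

end



lemma aux:
  fixes S :: "'s set" and C :: "'c set" and E :: "('s \<times> 'c) set"
    and V :: "'v set" and r :: 'v and par :: "'v \<Rightarrow> 'v" and l :: "'v \<Rightarrow> 'c \<Rightarrow> bool"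
    and c c' :: 'c
  assumes EC: "E \<subseteq> S \<times> C" and conn: "rb_connected S C E"
    and maxc: "\<forall>x\<in>C. maximal_char S C E {} x"
    and TM: "rb_solves S C E {} V r par l"
    and cC: "c \<in> C" and c'C: "c' \<in> C"
    and occ_c: "\<exists>x. gain_edge V r par l c x"
    and occ_c': "\<exists>x. gain_edge V r par l c' x"
    and ovl: "overlap S (rb_matrix E {}) c c'"
  shows "opt1 V r par l c c' \<or> opt1 V r par l c' c \<or> opt3 S C (rb_matrix E {}) V r par l c c'"
proof -
  have PP: "persistent_phylogeny S C (rb_matrix E {}) {} V r par l" using TM unfolding rb_solves_def .
  have rt: "rooted_tree V r par" using PP unfolding persistent_phylogeny_def by simp
  have r0: "\<forall>c\<in>C. \<not> l r c" using PP unfolding persistent_phylogeny_def by simp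
  have chg: "\<forall>c\<in>C. card (change_edges V r par l c) \<le> 2
         \<and> (card (change_edges V r par l c) = 2 \<longrightarrow>
              (\<exists>x y. change_edges V r par l c = {x, y} \<and> proper_anc par x y
                     \<and> gain_edge V r par l c x \<and> loss_edge V r par l c y))"
    using PP unfolding persistent_phylogeny_def by simp
  have real: "\<forall>s\<in>S. \<exists>x\<in>V. \<forall>ch\<in>C. l x ch = rb_matrix E {} s ch"
    using PP unfolding persistent_phylogeny_def by simp
  interpret P: pp V r par l C
    unfolding pp_def pp_axioms_def rt_def using rt r0 chg by simp
  have maxall: "\<forall>x\<in>C. \<forall>y\<in>C. \<not> (charS S (rb_matrix E {}) x \<subset> charS S (rb_matrix E {}) y)"
    using maxc unfolding maximal_char_def by simp
  obtain g where gc: "gain_edge V r par l c g" using occ_c by blast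
  obtain g' where gc': "gain_edge V r par l c' g'" using occ_c' by blast
  obtain w where w: "w \<in> S" "rb_matrix E {} w c" "rb_matrix E {} w c'"
    using ovl unfolding overlap_def charS_def by blast
  obtain xw where xw: "xw \<in> V" "\<forall>ch\<in>C. l xw ch = rb_matrix E {} w ch" using real w(1) by blast
  have "l xw c" "l xw c'" using xw w cC c'C by auto
  then have gxw: "anc par g xw" and g'xw: "anc par g' xw"
    using P.val[OF cC gc xw(1)] P.val[OF c'C gc' xw(1)] by blast+
  from P.anc_comp[OF gxw g'xw] show ?thesis
  proof
    assume "anc par g g'"
    from P.core[OF EC conn maxall real cC c'C gc gc' this ovl] show ?thesis by blast
  next
    assume "anc par g' g"
    from P.core[OF EC conn maxall real c'C cC gc' gc this overlap_sym[OF ovl]]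
    show ?thesis using opt3_sym[of S C "rb_matrix E {}" V r par l c' c] by blast
  qed
qed

theorem lemma4:
  fixes S :: "'s set" and C :: "'c set" and E :: "('s \<times> 'c) set" and Act :: "'c set"
    and V :: "'v set" and r :: 'v and par :: "'v \<Rightarrow> 'v" and l :: "'v \<Rightarrow> 'c \<Rightarrow> bool"
    and c c' :: 'c
  assumes GM: "maximal_reducible S C E Act"
    and TM: "rb_solves S C E Act V r par l"
    and cC: "c \<in> C" and c'C: "c' \<in> C"
    and inact: "c \<notin> Act" "c' \<notin> Act"
    and occ_c: "\<exists>x. gain_edge V r par l c x"
    and occ_c': "\<exists>x. gain_edge V r par l c' x"
    and ovl: "overlap S (rb_matrix E Act) c c'"
  shows
    "(\<exists>x1 x2 x3. gain_edge V r par l c x1 \<and> gain_edge V r par l c' x2 \<and> loss_edge V r par l c x3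
        \<and> proper_anc par x1 x2 \<and> proper_anc par x2 x3
        \<and> ((\<exists>x4. loss_edge V r par l c' x4 \<and> proper_anc par x3 x4)
            \<or> \<not> (\<exists>x4. loss_edge V r par l c' x4)))
   \<or> (\<exists>x1 x2 x3. gain_edge V r par l c' x1 \<and> gain_edge V r par l c x2 \<and> loss_edge V r par l c' x3
        \<and> proper_anc par x1 x2 \<and> proper_anc par x2 x3
        \<and> ((\<exists>x4. loss_edge V r par l c x4 \<and> proper_anc par x3 x4)
            \<or> \<not> (\<exists>x4. loss_edge V r par l c x4)))
   \<or> ((\<exists>y y'. loss_edge V r par l c y \<and> loss_edge V r par l c' y'
          \<and> \<not> anc par y y' \<and> \<not> anc par y' y)
      \<and> (conflicting S (rb_matrix E Act) c c' \<longrightarrow>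
          (\<exists>z x x'. species_node S C (rb_matrix E Act) V l z
             \<and> gain_edge V r par l c x \<and> gain_edge V r par l c' x'
             \<and> proper_anc par z x \<and> proper_anc par z x')))"
proof -
  have A0: "Act = {}" using GM unfolding maximal_reducible_def by simp
  have EC: "E \<subseteq> S \<times> C" using GM unfolding maximal_reducible_def rb_graph_def by simp
  have conn: "rb_connected S C E" using GM unfolding maximal_reducible_def reducible_def by simp
  have maxc: "\<forall>x\<in>C. maximal_char S C E {} x" using GM A0 unfolding maximal_reducible_def by simp
  have "opt1 V r par l c c' \<or> opt1 V r par l c' c \<or> opt3 S C (rb_matrix E {}) V r par l c c'"
    using aux[OF EC conn maxc TM[unfolded A0] cC c'C occ_c occ_c' ovl[unfolded A0]] .
  then show ?thesis unfolding A0 opt1_def opt3_def .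
qed


end
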